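(* If a $T_1$-space $X$ has a regular base at non-isolated points, then (1) $X$ is proto-metrizable, and (2) $X$ is a $\gamma$-space.
   Context: $I(X)$ is the set of isolated points, $\mathcal{I}(X)=\{\{x\}:x\in I(X)\}$. A base $\mathcal{B}$ is regular at $x$ if for every neighborhood $U$ of $x$ there is an open $V$ with $x\in V\subset U$ such that $\{B\in\mathcal{B}: B\cap V\neq\emptyset,\ B\not\subset U\}$ is finite; a regular base at non-isolated points is regular at every $x\in X\setminus I(X)$. An ortho-base of $X$ is a base $\mathcal{B}$ such that for every $\mathcal{A}\subset\mathcal{B}$, either $\bigcap\mathcal{A}$ is open in $X$, or $\bigcap\mathcal{A}=\{x\}$ for some $x\notin I(X)$ and $\mathcal{A}$ is a neighborhood base at $x$. $X$ is proto-metrizable if it is (Hausdorff) paracompact and has an ortho-base. A $g$-function assigns to each $n\in\mathbb{N}$, $x\in X$ an open set $g(n,x)\ni x$; $X$ is a $\gamma$-space if there is a $g$-function such that for each $x\in X$ and sequences $\{x_n\},\{y_n\}$ with $x_n\in g(n,y_n)$ and $y_n\in g(n,x)$ for all $n$, we have $x_n\to x$. *)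

theory Defs
  imports "HOL-Analysis.Analysis"
begin

definition isolated_pts :: "'a topology \<Rightarrow> 'a set" where
  "isolated_pts X = {x \<in> topspace X. openin X {x}}"

definition is_base :: "'a topology \<Rightarrow> 'a set set \<Rightarrow> bool" where
  "is_base X \<B> \<longleftrightarrow> (\<forall>B\<in>\<B>. openin X B) \<and>
     (\<forall>U x. openin X U \<and> x \<in> U \<longrightarrow> (\<exists>B\<in>\<B>. x \<in> B \<and> B \<subseteq> U))"

definition nbhd_of :: "'a topology \<Rightarrow> 'a set \<Rightarrow> 'a \<Rightarrow> bool" where
  "nbhd_of X U x \<longleftrightarrow> U \<subseteq> topspace X \<and> (\<exists>W. openin X W \<and> x \<in> W \<and> W \<subseteq> U)"

definition regular_at :: "'a topology \<Rightarrow> 'a set set \<Rightarrow> 'a \<Rightarrow> bool" where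
  "regular_at X \<B> x \<longleftrightarrow>
     (\<forall>U. nbhd_of X U x \<longrightarrow>
        (\<exists>V. openin X V \<and> x \<in> V \<and> V \<subseteq> U \<and>
             finite {B \<in> \<B>. B \<inter> V \<noteq> {} \<and> \<not> B \<subseteq> U}))"

definition regular_base_at_nonisolated :: "'a topology \<Rightarrow> 'a set set \<Rightarrow> bool" where
  "regular_base_at_nonisolated X \<B> \<longleftrightarrow> is_base X \<B> \<and>
     (\<forall>x \<in> topspace X - isolated_pts X. regular_at X \<B> x)"

definition nbhd_base_at :: "'a topology \<Rightarrow> 'a set set \<Rightarrow> 'a \<Rightarrow> bool" where
  "nbhd_base_at X \<A> x \<longleftrightarrow> (\<forall>A\<in>\<A>. nbhd_of X A x) \<and>
     (\<forall>U. nbhd_of X U x \<longrightarrow> (\<exists>A\<in>\<A>. A \<subseteq> U))"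

text \<open>Ortho-base; intersections are taken inside the space X (so the empty
  subfamily has intersection X).\<close>
definition ortho_base :: "'a topology \<Rightarrow> 'a set set \<Rightarrow> bool" where
  "ortho_base X \<B> \<longleftrightarrow> is_base X \<B> \<and>
     (\<forall>\<A> \<subseteq> \<B>. openin X (topspace X \<inter> \<Inter>\<A>) \<or>
        (\<exists>x \<in> topspace X - isolated_pts X.
            topspace X \<inter> \<Inter>\<A> = {x} \<and> nbhd_base_at X \<A> x))"

definition paracompact_space :: "'a topology \<Rightarrow> bool" where
  "paracompact_space X \<longleftrightarrow> Hausdorff_space X \<and>
     (\<forall>\<U>. (\<forall>U\<in>\<U>. openin X U) \<and> \<Union>\<U> = topspace X \<longrightarrow>
        (\<exists>\<V>. (\<forall>V\<in>\<V>. openin X V) \<and> \<Union>\<V> = topspace X \<and>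
             (\<forall>V\<in>\<V>. \<exists>U\<in>\<U>. V \<subseteq> U) \<and> locally_finite_in X \<V>))"

definition proto_metrizable :: "'a topology \<Rightarrow> bool" where
  "proto_metrizable X \<longleftrightarrow> paracompact_space X \<and> (\<exists>\<B>. ortho_base X \<B>)"

definition g_function :: "'a topology \<Rightarrow> (nat \<Rightarrow> 'a \<Rightarrow> 'a set) \<Rightarrow> bool" where
  "g_function X g \<longleftrightarrow> (\<forall>n. \<forall>x \<in> topspace X. openin X (g n x) \<and> x \<in> g n x)"

definition gamma_space :: "'a topology \<Rightarrow> bool" where
  "gamma_space X \<longleftrightarrow> (\<exists>g. g_function X g \<and>
     (\<forall>x \<in> topspace X. \<forall>xs ys.
        (\<forall>n. xs n \<in> topspace X \<and> ys n \<in> topspace X \<and>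
             xs n \<in> g n (ys n) \<and> ys n \<in> g n x) \<longrightarrow>
        limitin X xs x sequentially))"

end

theory Submission
  imports Defs
begin

lemma open_nbhd: "openin X U \<Longrightarrow> x \<in> U \<Longrightarrow> nbhd_of X U x"
  by (auto simp: nbhd_of_def openin_subset)

lemma nonisol_iff: "x \<in> topspace X - isolated_pts X \<longleftrightarrow> x \<in> topspace X \<and> \<not> openin X {x}"
  by (auto simp: isolated_pts_def)

lemma cofin:
  assumes "regular_base_at_nonisolated X \<B>" "x \<in> topspace X - isolated_pts X" "nbhd_of X U x"
  shows "finite {B\<in>\<B>. x \<in> B \<and> \<not> B \<subseteq> U}"
proof -
  from assms obtain V where V: "openin X V" "x\<in>V" "V\<subseteq>U"
    "finite {B\<in>\<B>. B\<inter>V\<noteq>{} \<and> \<not>B\<subseteq>U}"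
    unfolding regular_base_at_nonisolated_def regular_at_def by blast
  show ?thesis by (rule finite_subset[OF _ V(4)]) (use V(2) in auto)
qed

lemma t1_open_del: "t1_space X \<Longrightarrow> openin X (topspace X - {z})"
  by (meson openin_topspace t1_space_openin_delete_alt)

lemma inter_single:
  assumes "t1_space X" "is_base X \<B>" "\<A> \<subseteq> \<B>" "x \<in> \<Inter>\<A>" "x \<in> topspace X"
    and H: "\<And>U. openin X U \<Longrightarrow> x\<in>U \<Longrightarrow> \<exists>A\<in>\<A>. A \<subseteq> U"
  shows "topspace X \<inter> \<Inter>\<A> = {x}"
proof -
  { fix z assume z: "z \<in> topspace X" "z \<in> \<Inter>\<A>" "z \<noteq> x"
    obtain A where "A \<in> \<A>" "A \<subseteq> topspace X - {z}"
      using H[OF t1_open_del[OF assms(1), of z]] z assms(5) by blast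
    with z have False by auto }
  then show ?thesis using assms(4,5) by auto
qed

lemma infinite_Bx:
  assumes "t1_space X" "regular_base_at_nonisolated X \<B>" "x \<in> topspace X - isolated_pts X"
  shows "infinite {B\<in>\<B>. x \<in> B}"
proof
  assume fin: "finite {B\<in>\<B>. x \<in> B}"
  have base: "is_base X \<B>" using assms(2) by (simp add: regular_base_at_nonisolated_def)
  have H: "\<And>U. openin X U \<Longrightarrow> x\<in>U \<Longrightarrow> \<exists>A\<in>{B\<in>\<B>. x \<in> B}. A \<subseteq> U"
    using base unfolding is_base_def by blast
  have ne: "{B\<in>\<B>. x \<in> B} \<noteq> {}" using H[OF openin_topspace] assms(3) by auto
  have op: "openin X (\<Inter>{B\<in>\<B>. x \<in> B})"
    by (rule openin_Inter[OF fin ne]) (use base in \<open>auto simp: is_base_def\<close>)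
  have sub: "\<Inter>{B\<in>\<B>. x \<in> B} \<subseteq> topspace X" using op openin_subset by blast
  have "topspace X \<inter> \<Inter>{B\<in>\<B>. x \<in> B} = {x}"
    by (rule inter_single[OF assms(1) base _ _ _ H]) (use assms(3) in auto)
  with sub have "\<Inter>{B\<in>\<B>. x \<in> B} = {x}" by auto
  with op assms(3) show False by (simp add: isolated_pts_def)
qed

lemma hausdorff:
  assumes t1: "t1_space X" and R: "regular_base_at_nonisolated X \<B>"
  shows "Hausdorff_space X"
  unfolding Hausdorff_space_def
proof (intro allI impI)
  fix x y assume xy: "x \<in> topspace X \<and> y \<in> topspace X \<and> x \<noteq> y"
  have base: "is_base X \<B>" using R by (simp add: regular_base_at_nonisolated_def)
  show "\<exists>U V. openin X U \<and> openin X V \<and> x \<in> U \<and> y \<in> V \<and> disjnt U V"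
  proof (cases "openin X {x}")
    case True
    then show ?thesis using xy t1_open_del[OF t1, of x] by (intro exI[of _ "{x}"] exI[of _ "topspace X - {x}"]) auto
  next
    case nx: False
    show ?thesis
    proof (cases "openin X {y}")
      case True
      then show ?thesis using xy t1_open_del[OF t1, of y] by (intro exI[of _ "topspace X - {y}"] exI[of _ "{y}"]) auto
    next
      case ny: False
      have xN: "x \<in> topspace X - isolated_pts X" using xy nx by (simp add: isolated_pts_def)
      obtain V where V: "openin X V" "x\<in>V" "V\<subseteq>topspace X - {y}"
        and F: "finite {B\<in>\<B>. B\<inter>V\<noteq>{} \<and> \<not>B\<subseteq>topspace X - {y}}"
        using R xN open_nbhd[OF t1_open_del[OF t1, of y], of x] xy
        unfolding regular_base_at_nonisolated_def regular_at_def by blast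
      define F where "F = {B\<in>\<B>. B\<inter>V\<noteq>{} \<and> \<not>B\<subseteq>topspace X - {y}}"
      have "\<forall>B\<in>F. \<exists>z. z \<in> B \<and> z \<noteq> y"
      proof
        fix B assume "B \<in> F"
        hence "openin X B" using base by (auto simp: F_def is_base_def)
        moreover have "B \<noteq> {y}" using ny calculation by auto
        moreover have "B \<noteq> {}" using \<open>B\<in>F\<close> by (auto simp: F_def)
        ultimately show "\<exists>z. z \<in> B \<and> z \<noteq> y" by blast
      qed
      then obtain zf where zf: "\<And>B. B\<in>F \<Longrightarrow> zf B \<in> B \<and> zf B \<noteq> y" by metis
      have Fsub: "\<And>B. B \<in> F \<Longrightarrow> B \<subseteq> topspace X" using base by (auto simp: F_def is_base_def openin_subset)
      have "finite (zf ` F)" using F by (simp add: F_def)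
      moreover have "zf ` F \<subseteq> topspace X" using zf Fsub by blast
      ultimately have "closedin X (zf ` F)"
        using t1 unfolding t1_space_closedin_finite by blast
      hence W: "openin X (topspace X - zf ` F)" by blast
      have "y \<in> topspace X - zf ` F" using xy zf by auto
      then obtain B' where B': "B' \<in> \<B>" "y \<in> B'" "B' \<subseteq> topspace X - zf ` F"
        using base W unfolding is_base_def by blast
      have "B' \<inter> V = {}"
      proof (rule ccontr)
        assume "B' \<inter> V \<noteq> {}"
        hence "B' \<in> F" using B' by (auto simp: F_def)
        thus False using zf B' by auto
      qed
      moreover have "openin X B'" using base B' by (auto simp: is_base_def)
      ultimately show ?thesis using V B' by (intro exI[of _ V] exI[of _ B']) (auto simp: disjnt_def)
    qed
  qed
qed

lemma ortho:
  assumes t1: "t1_space X" and R: "regular_base_at_nonisolated X \<B>"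
  shows "ortho_base X \<B>"
proof -
  have base: "is_base X \<B>" using R by (simp add: regular_base_at_nonisolated_def)
  have bo: "\<And>B. B \<in> \<B> \<Longrightarrow> openin X B" using base by (simp add: is_base_def)
  { fix \<A> assume A: "\<A> \<subseteq> \<B>"
    have "openin X (topspace X \<inter> \<Inter>\<A>) \<or>
        (\<exists>x \<in> topspace X - isolated_pts X.
            topspace X \<inter> \<Inter>\<A> = {x} \<and> nbhd_base_at X \<A> x)"
    proof (cases "finite \<A>")
      case True
      have "openin X (topspace X \<inter> \<Inter>\<A>)"
        by (rule openin_Int_Inter[OF True openin_topspace]) (use A bo in blast)
      then show ?thesis by (rule disjI1)
    next
      case inf: False
      show ?thesis
      proof (cases "\<exists>x \<in> topspace X - isolated_pts X. x \<in> \<Inter>\<A>")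
        case True
        then obtain x where x: "x \<in> topspace X - isolated_pts X" "x \<in> \<Inter>\<A>" by blast
        have H: "\<exists>A\<in>\<A>. A \<subseteq> U" if "nbhd_of X U x" for U
        proof -
          have f1: "finite {B\<in>\<B>. x \<in> B \<and> \<not> B \<subseteq> U}" by (rule cofin[OF R x(1) that])
          have s1: "\<A> \<subseteq> {B\<in>\<B>. x \<in> B \<and> \<not> B \<subseteq> U} \<union> {A\<in>\<A>. A \<subseteq> U}" using A x by auto
          have "{A\<in>\<A>. A \<subseteq> U} \<noteq> {}"
          proof
            assume "{A\<in>\<A>. A \<subseteq> U} = {}"
            hence "\<A> \<subseteq> {B\<in>\<B>. x \<in> B \<and> \<not> B \<subseteq> U}" using s1 by auto
            hence "finite \<A>" using f1 finite_subset by blast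
            thus False using inf by contradiction
          qed
          thus ?thesis by auto
        qed
        have nb: "nbhd_base_at X \<A> x"
          unfolding nbhd_base_at_def
        proof (intro conjI)
          show "\<forall>A\<in>\<A>. nbhd_of X A x"
          proof
            fix A assume a: "A \<in> \<A>"
            show "nbhd_of X A x" by (rule open_nbhd) (use x A bo a in auto)
          qed
          show "\<forall>U. nbhd_of X U x \<longrightarrow> (\<exists>A\<in>\<A>. A \<subseteq> U)" using H by blast
        qed
        have xt: "x \<in> topspace X" using x(1) by blast
        have "topspace X \<inter> \<Inter>\<A> = {x}"
          by (rule inter_single[OF t1 base A x(2) xt]) (rule H, rule open_nbhd)
        hence "topspace X \<inter> \<Inter>\<A> = {x} \<and> nbhd_base_at X \<A> x" using nb by blast
        hence "\<exists>x \<in> topspace X - isolated_pts X. topspace X \<inter> \<Inter>\<A> = {x} \<and> nbhd_base_at X \<A> x"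
          using x(1) by blast
        thus ?thesis by (rule disjI2)
      next
        case False
        hence sub: "topspace X \<inter> \<Inter>\<A> \<subseteq> isolated_pts X" by auto
        have "topspace X \<inter> \<Inter>\<A> = \<Union>((\<lambda>y. {y}) ` (topspace X \<inter> \<Inter>\<A>))" by auto
        moreover have "openin X (\<Union>((\<lambda>y. {y}) ` (topspace X \<inter> \<Inter>\<A>)))"
        proof (rule openin_Union, clarify)
          fix y assume "y \<in> topspace X" "y \<in> \<Inter>\<A>"
          thus "openin X {y}" using sub by (auto simp: isolated_pts_def)
        qed
        ultimately have "openin X (topspace X \<inter> \<Inter>\<A>)" by simp
        then show ?thesis by (rule disjI1)
      qed
    qed }
  then show ?thesis using base by (simp add: ortho_base_def)
qed

lemma gamma:
  assumes t1: "t1_space X" and R: "regular_base_at_nonisolated X \<B>"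
  shows "gamma_space X"
proof -
  define Nn where "Nn = topspace X - isolated_pts X"
  have base: "is_base X \<B>" using R by (simp add: regular_base_at_nonisolated_def)
  have bo: "\<And>B. B \<in> \<B> \<Longrightarrow> openin X B" using base by (simp add: is_base_def)
  have "\<forall>x\<in>Nn. \<exists>e::nat\<Rightarrow>'a set. inj e \<and> range e \<subseteq> {B\<in>\<B>. x\<in>B}"
    using infinite_Bx[OF t1 R] infinite_countable_subset unfolding Nn_def by blast
  from bchoice[OF this] obtain e :: "'a \<Rightarrow> nat \<Rightarrow> 'a set"
    where e0: "\<forall>x\<in>Nn. inj (e x) \<and> range (e x) \<subseteq> {B\<in>\<B>. x\<in>B}" by blast
  have e: "\<And>x. x\<in>Nn \<Longrightarrow> inj (e x) \<and> range (e x) \<subseteq> {B\<in>\<B>. x\<in>B}" using e0 by blast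
  define g where "g n y = (if y \<in> Nn then (\<Inter>k\<in>{..n}. e y k) else {y})" for n y
  have gf: "g_function X g"
    unfolding g_function_def
  proof (intro allI ballI conjI)
    fix n y assume y: "y \<in> topspace X"
    show "openin X (g n y)"
    proof (cases "y \<in> Nn")
      case True
      have "openin X (\<Inter>k\<in>{..n}. e y k)"
        by (rule openin_INT2) (use e[OF True] bo in auto)
      then show ?thesis using True by (simp add: g_def)
    next
      case False
      then show ?thesis using y by (simp add: g_def Nn_def isolated_pts_def)
    qed
    show "y \<in> g n y" using e by (auto simp: g_def)
  qed
  have lim: "limitin X xs x sequentially"
    if x: "x \<in> topspace X" and H: "\<forall>n. xs n \<in> topspace X \<and> ys n \<in> topspace X \<and>
             xs n \<in> g n (ys n) \<and> ys n \<in> g n x" for x xs ys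
  proof (cases "x \<in> Nn")
    case False
    have "\<And>n. xs n = x"
    proof -
      fix n
      have "ys n = x" using H False by (simp add: g_def)
      thus "xs n = x" using H False by (metis g_def singletonD)
    qed
    then show ?thesis using x by (simp add: limitin_sequentially)
  next
    case xN: True
    show ?thesis unfolding limitin_sequentially
    proof (intro conjI allI impI)
      show "x \<in> topspace X" by fact
      fix U assume U: "openin X U \<and> x \<in> U"
      have "regular_at X \<B> x" using R xN by (simp add: regular_base_at_nonisolated_def Nn_def)
      from this[unfolded regular_at_def, rule_format, OF open_nbhd[of X U x]]
      obtain V where V: "openin X V" "x\<in>V" "V\<subseteq>U"
        and F: "finite {B\<in>\<B>. B\<inter>V\<noteq>{} \<and> \<not>B\<subseteq>U}"
        using U by blast
      define F where "F = {B\<in>\<B>. B\<inter>V\<noteq>{} \<and> \<not>B\<subseteq>U}"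
      have "finite {B\<in>\<B>. x \<in> B \<and> \<not> B \<subseteq> V}"
        by (rule cofin[OF R]) (use xN V in \<open>auto simp: Nn_def intro: open_nbhd\<close>)
      hence fv: "finite (e x -` {B\<in>\<B>. x \<in> B \<and> \<not> B \<subseteq> V})"
        using e[OF xN] by (intro finite_vimageI) auto
      have sv: "{n. \<not> e x n \<subseteq> V} \<subseteq> e x -` {B\<in>\<B>. x \<in> B \<and> \<not> B \<subseteq> V}"
        using e[OF xN] by auto
      have "finite {n. \<not> e x n \<subseteq> V}" by (rule finite_subset[OF sv fv])
      from finite_nat_bounded[OF this] obtain N1 where "{n. \<not> e x n \<subseteq> V} \<subseteq> {..<N1}" by blast
      hence N1: "\<And>n. \<not> e x n \<subseteq> V \<Longrightarrow> n < N1" by auto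
      show "\<exists>N. \<forall>n. N \<le> n \<longrightarrow> xs n \<in> U"
      proof (intro exI[of _ "max N1 (card F)"] allI impI)
        fix n assume n: "max N1 (card F) \<le> n"
        have "ys n \<in> g n x" using H by blast
        hence "ys n \<in> e x n" using xN by (auto simp: g_def)
        moreover have "e x n \<subseteq> V" using N1[of n] n by force
        ultimately have yV: "ys n \<in> V" by blast
        show "xs n \<in> U"
        proof (cases "ys n \<in> Nn")
          case False
          have "xs n \<in> g n (ys n)" using H by blast
          hence "xs n = ys n" using False by (simp add: g_def)
          then show ?thesis using yV V(3) by auto
        next
          case yN: True
          let ?y = "ys n"
          have "\<exists>k\<le>n. e ?y k \<notin> F"
          proof (rule ccontr)
            assume "\<not> (\<exists>k\<le>n. e ?y k \<notin> F)"
            hence "e ?y ` {..n} \<subseteq> F" by auto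
            hence "card (e ?y ` {..n}) \<le> card F" by (rule card_mono[OF F[folded F_def]])
            moreover have "card (e ?y ` {..n}) = Suc n"
              using e[OF yN] by (simp add: card_image inj_on_def inj_def)
            ultimately show False using n by simp
          qed
          then obtain k where k: "k \<le> n" "e ?y k \<notin> F" by blast
          have "e ?y k \<in> \<B>" "?y \<in> e ?y k" using e[OF yN] by auto
          moreover have "e ?y k \<inter> V \<noteq> {}" using yV calculation(2) by blast
          ultimately have "e ?y k \<subseteq> U" using k(2) by (simp add: F_def)
          moreover have "xs n \<in> g n ?y" using H by blast
          hence "xs n \<in> (\<Inter>k\<in>{..n}. e ?y k)" using yN by (simp add: g_def)
          hence "xs n \<in> e ?y k" using k(1) by blast
          ultimately show ?thesis by blast
        qed
      qed
    qed
  qed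
  show ?thesis unfolding gamma_space_def using gf lim by blast
qed

lemma paracompact:
  assumes t1: "t1_space X" and R: "regular_base_at_nonisolated X \<B>"
  shows "paracompact_space X"
  unfolding paracompact_space_def
proof (intro conjI allI impI)
  show "Hausdorff_space X" by (rule hausdorff[OF t1 R])
  fix \<U> assume UU: "(\<forall>U\<in>\<U>. openin X U) \<and> \<Union>\<U> = topspace X"
  define Nn where "Nn = topspace X - isolated_pts X"
  have base: "is_base X \<B>" using R by (simp add: regular_base_at_nonisolated_def)
  have bo: "\<And>B. B \<in> \<B> \<Longrightarrow> openin X B" using base by (simp add: is_base_def)
  define P where "P = {B\<in>\<B>. \<exists>U\<in>\<U>. B \<subseteq> U}"
  define M where "M = {B\<in>P. \<forall>C\<in>P. B \<subseteq> C \<longrightarrow> C = B}"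
  have MP: "M \<subseteq> P" by (auto simp: M_def)
  have PB: "P \<subseteq> \<B>" by (auto simp: P_def)
  have cov: "\<exists>m\<in>M. x \<in> m" if xN: "x \<in> Nn" for x
  proof -
    have "x \<in> \<Union>\<U>" using UU xN by (simp add: Nn_def)
    then obtain U0 where U0: "U0 \<in> \<U>" "x \<in> U0" by blast
    have "openin X U0" using UU U0 by blast
    then obtain B where B: "B \<in> \<B>" "x \<in> B" "B \<subseteq> U0"
      using base U0 unfolding is_base_def by blast
    have BP: "B \<in> P" using B U0 by (auto simp: P_def)
    define S where "S = {C\<in>P. B \<subseteq> C}"
    have f: "finite {C\<in>\<B>. x \<in> C \<and> \<not> C \<subseteq> B}"
      by (rule cofin[OF R]) (use xN B bo in \<open>auto simp: Nn_def intro: open_nbhd\<close>)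
    have "S \<subseteq> {C\<in>\<B>. x \<in> C \<and> \<not> C \<subseteq> B} \<union> {B}"
      using B PB by (auto simp: S_def)
    hence fS: "finite S" by (rule finite_subset) (use f in simp)
    have "S \<noteq> {}" using BP by (auto simp: S_def)
    from finite_has_maximal[OF fS this] obtain m where m: "m \<in> S" "\<forall>b\<in>S. m \<subseteq> b \<longrightarrow> m = b"
      by blast
    have "m \<in> M"
      unfolding M_def
    proof (intro CollectI conjI ballI impI)
      show "m \<in> P" using m by (simp add: S_def)
      fix C assume "C \<in> P" "m \<subseteq> C"
      moreover have "B \<subseteq> m" using m by (simp add: S_def)
      ultimately have "C \<in> S" by (auto simp: S_def)
      thus "C = m" using m \<open>m \<subseteq> C\<close> by blast
    qed
    moreover have "x \<in> m" using m B by (auto simp: S_def)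
    ultimately show ?thesis by blast
  qed
  define Fam where "Fam = {V. openin X V \<and> V \<subseteq> \<Union>M \<and> finite {m\<in>M. m \<inter> V \<noteq> {}}}"
  define Op where "Op = \<Union>Fam"
  have Oo: "openin X Op" unfolding Op_def Fam_def by (rule openin_Union) blast
  have NO: "x \<in> Op" if xN: "x \<in> Nn" for x
  proof -
    obtain m0 where m0: "m0 \<in> M" "x \<in> m0" using cov[OF xN] by blast
    have "openin X m0" using m0 MP PB bo by blast
    have "regular_at X \<B> x" using R xN by (simp add: regular_base_at_nonisolated_def Nn_def)
    from this[unfolded regular_at_def, rule_format, OF open_nbhd[OF \<open>openin X m0\<close> m0(2)]]
    obtain V where V: "openin X V" "x\<in>V" "V\<subseteq>m0"
        and F: "finite {B\<in>\<B>. B\<inter>V\<noteq>{} \<and> \<not>B\<subseteq>m0}" by blast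
    have "{m\<in>M. m \<inter> V \<noteq> {}} \<subseteq> {B\<in>\<B>. B\<inter>V\<noteq>{} \<and> \<not>B\<subseteq>m0} \<union> {m0}"
    proof
      fix m assume m: "m \<in> {m\<in>M. m \<inter> V \<noteq> {}}"
      show "m \<in> {B\<in>\<B>. B\<inter>V\<noteq>{} \<and> \<not>B\<subseteq>m0} \<union> {m0}"
      proof (cases "m \<subseteq> m0")
        case True
        have "m0 \<in> P" using m0 MP by blast
        hence "m0 = m" using m True by (auto simp: M_def)
        thus ?thesis by simp
      next
        case False
        thus ?thesis using m MP PB by auto
      qed
    qed
    hence "finite {m\<in>M. m \<inter> V \<noteq> {}}"
      by (rule finite_subset) (use F in simp)
    moreover have "V \<subseteq> \<Union>M" using V m0 by blast
    ultimately have "V \<in> Fam" using V by (simp add: Fam_def)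
    thus ?thesis using V unfolding Op_def by blast
  qed
  define \<V> where "\<V> = (\<lambda>m. m \<inter> Op) ` M \<union> (\<lambda>y. {y}) ` (topspace X - Op)"
  have Mo: "\<And>m. m \<in> M \<Longrightarrow> openin X m" using MP PB bo by blast
  have iso: "\<And>y. y \<in> topspace X - Op \<Longrightarrow> openin X {y}"
    using NO by (auto simp: Nn_def isolated_pts_def)
  have V1: "\<forall>V\<in>\<V>. openin X V"
    using Mo iso Oo by (auto simp: \<V>_def)
  have sub: "\<Union>\<V> \<subseteq> topspace X"
    using Mo openin_subset by (fastforce simp: \<V>_def)
  have V2: "\<Union>\<V> = topspace X"
  proof
    show "\<Union>\<V> \<subseteq> topspace X" by (rule sub)
    show "topspace X \<subseteq> \<Union>\<V>"
    proof
      fix y assume y: "y \<in> topspace X"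
      show "y \<in> \<Union>\<V>"
      proof (cases "y \<in> Op")
        case True
        then obtain V where "V \<in> Fam" "y \<in> V" by (auto simp: Op_def)
        then obtain m where "m \<in> M" "y \<in> m" by (auto simp: Fam_def)
        hence "y \<in> m \<inter> Op" "m \<inter> Op \<in> \<V>" using True by (auto simp: \<V>_def)
        thus ?thesis by blast
      next
        case False
        hence "{y} \<in> \<V>" using y by (auto simp: \<V>_def)
        thus ?thesis by blast
      qed
    qed
  qed
  have V3: "\<forall>V\<in>\<V>. \<exists>U\<in>\<U>. V \<subseteq> U"
  proof
    fix V assume "V \<in> \<V>"
    then consider (a) m where "m \<in> M" "V = m \<inter> Op" | (b) y where "y \<in> topspace X" "V = {y}"
      by (auto simp: \<V>_def)
    then show "\<exists>U\<in>\<U>. V \<subseteq> U"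
    proof cases
      case a
      then obtain U where "U \<in> \<U>" "m \<subseteq> U" using MP by (auto simp: P_def)
      thus ?thesis using a by blast
    next
      case b
      then obtain U where "U \<in> \<U>" "y \<in> U" using UU by blast
      thus ?thesis using b by blast
    qed
  qed
  have V4: "locally_finite_in X \<V>"
    unfolding locally_finite_in_def
  proof (intro conjI ballI)
    show "\<Union>\<V> \<subseteq> topspace X" by (rule sub)
    fix x assume x: "x \<in> topspace X"
    show "\<exists>V. openin X V \<and> x \<in> V \<and> finite {U \<in> \<V>. U \<inter> V \<noteq> {}}"
    proof (cases "x \<in> Op")
      case True
      then obtain V where V: "V \<in> Fam" "x \<in> V" by (auto simp: Op_def)
      have VO: "V \<subseteq> Op" using V(1) by (auto simp: Op_def)
      have "{U \<in> \<V>. U \<inter> V \<noteq> {}} \<subseteq> (\<lambda>m. m \<inter> Op) ` {m\<in>M. m \<inter> V \<noteq> {}}"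
        using VO by (auto simp: \<V>_def)
      moreover have "finite ((\<lambda>m. m \<inter> Op) ` {m\<in>M. m \<inter> V \<noteq> {}})"
        using V(1) by (simp add: Fam_def)
      ultimately have "finite {U \<in> \<V>. U \<inter> V \<noteq> {}}" by (rule finite_subset)
      moreover have "openin X V" using V(1) by (simp add: Fam_def)
      ultimately show ?thesis using V(2) by blast
    next
      case False
      have "{U \<in> \<V>. U \<inter> {x} \<noteq> {}} \<subseteq> {{x}}"
        using False by (auto simp: \<V>_def)
      hence "finite {U \<in> \<V>. U \<inter> {x} \<noteq> {}}" by (rule finite_subset) simp
      moreover have "openin X {x}" using iso x False by blast
      ultimately show ?thesis by blast
    qed
  qed
  show "\<exists>\<V>. (\<forall>V\<in>\<V>. openin X V) \<and> \<Union>\<V> = topspace X \<and>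
             (\<forall>V\<in>\<V>. \<exists>U\<in>\<U>. V \<subseteq> U) \<and> locally_finite_in X \<V>"
    using V1 V2 V3 V4 by blast
qed

theorem mainTheorem14:
  fixes X :: "'a topology" and \<B> :: "'a set set"
  assumes "t1_space X"
    and "regular_base_at_nonisolated X \<B>"
  shows "proto_metrizable X \<and> gamma_space X"
  using paracompact[OF assms] ortho[OF assms] gamma[OF assms]
  unfolding proto_metrizable_def by blast

end
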